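(* Let $t_0\in\mathbb{R}$, $q_0\ge 0$, $\mu>0$, $\alpha>0$, let $X:[t_0,+\infty)\to[0,+\infty)$ be continuous, and let $q$ be the solution of $$q'(t)=X(t)-\Big[\mu+e^{-\alpha q(t)}\big(\min\{\mu,X(t)\}-\mu\big)\Big],\qquad q(t_0)=q_0.$$ Define the exit time $\Lambda(t)=t+\dfrac{q(t)}{\mu}$. Then for all $t_0\le t<s$ we have $\Lambda(t)<\Lambda(s)$.
   Context: This ODE is the logistic queue model: $q$ is the queue size, $X$ the inflow, $\mu>0$ the maximum outflow rate and $\alpha>0$ a fixed model parameter. $\Lambda(t)$ is interpreted as the exit time of an entity arriving at time $t$. *)

theory Defs
  imports "HOL-Analysis.Analysis"
begin

definition exit_time :: "real \<Rightarrow> (real \<Rightarrow> real) \<Rightarrow> real \<Rightarrow> real" where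
  "exit_time \<mu> q t = t + q t / \<mu>"

end

theory Submission
  imports Defs
begin

theorem mainTheorem5:
  fixes t0 q0 \<mu> \<alpha> :: real and X q :: "real \<Rightarrow> real"
  assumes q0: "q0 \<ge> 0" and mu: "\<mu> > 0" and alpha: "\<alpha> > 0"
    and Xcont: "continuous_on {t0..} X"
    and Xnonneg: "\<And>t. t \<ge> t0 \<Longrightarrow> X t \<ge> 0"
    and init: "q t0 = q0"
    and ode: "\<And>t. t \<ge> t0 \<Longrightarrow>
       (q has_real_derivative
          (X t - (\<mu> + exp (- \<alpha> * q t) * (min \<mu> (X t) - \<mu>)))) (at t within {t0..})"
    and ts: "t0 \<le> t" "t < s"
  shows "exit_time \<mu> q t < exit_time \<mu> q s"
proof -
  let ?f = "\<lambda>x. x + q x / \<mu>"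
  have cq: "continuous_on {t0..} q"
    unfolding continuous_on_eq_continuous_within
    using ode DERIV_continuous by (metis atLeast_iff)
  have "continuous_on {t..s} q"
    using continuous_on_subset[OF cq] ts by auto
  then have cf: "continuous_on {t..s} ?f"
    by (intro continuous_intros) (use mu in auto)
  have "?f t < ?f s"
  proof (rule DERIV_pos_imp_increasing_open[OF ts(2) _ cf])
    fix x assume x: "t < x" "x < s"
    define d where "d = X x - (\<mu> + exp (- \<alpha> * q x) * (min \<mu> (X x) - \<mu>))"
    have "at x within {t0..} = at x"
      by (rule at_within_open_subset[of x "{t0<..}"]) (use x ts in auto)
    with ode[of x] x ts have dq: "(q has_real_derivative d) (at x)"
      unfolding d_def by auto
    have "(?f has_real_derivative (1 + d / \<mu>)) (at x)"
      by (use mu in \<open>auto intro!: derivative_eq_intros dq\<close>)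
    moreover have "1 + d / \<mu> > 0"
    proof -
      have e: "exp (- \<alpha> * q x) > 0" by simp
      have Xx: "X x \<ge> 0" using Xnonneg x ts by auto
      have "\<mu> + d > 0"
      proof (cases "X x > 0")
        case True
        have "exp (- \<alpha> * q x) * (min \<mu> (X x) - \<mu>) \<le> 0"
          using e by (intro mult_nonneg_nonpos) auto
        then show ?thesis unfolding d_def using True by linarith
      next
        case False
        then have "X x = 0" using Xx by auto
        then show ?thesis unfolding d_def using e mu by simp
      qed
      then have "(\<mu> + d) / \<mu> > 0" using mu by simp
      then show ?thesis using mu by (simp add: field_simps)
    qed
    ultimately show "\<exists>y. (?f has_real_derivative y) (at x) \<and> y > 0" by blast
  qed
  then show ?thesis unfolding exit_time_def .
qed

end
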